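(* Let $r\ge 0$ and $k\ge r$ be integers and let $t$ be an integer with $2\le t\le r+1$. Let $\Omega=\lfloor tr/(t-1)\rfloor+1$, $a=t(r+1)+(1-t)\Omega$, $b=t-1-a$. Then \[t\binom{k+2-(r+1)}{2}-b\binom{k+2-\Omega}{2}-a\binom{k+2-(\Omega+1)}{2}=\binom{k+2}{2}-\binom{r+2}{2}-\sum_{j=1}^{k-r}(r+j+1-j\,t)_+ .\]
   Context: $(x)_+=\max(x,0)$; an empty sum is $0$. Binomial coefficients follow the convention $\binom{m}{2}=m(m-1)/2$ for integers $m\ge 2$ and $\binom{m}{2}=0$ for $m<2$. *)

theory Defs
  imports Main
begin

definition binom2 :: "int \<Rightarrow> int" where
  "binom2 m = (if m \<ge> 2 then m * (m - 1) div 2 else 0)"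

definition pos_part :: "int \<Rightarrow> int" where
  "pos_part x = max x 0"

end

theory Submission
  imports Defs
begin

lemma binom2_succ: "binom2 (n+1) = binom2 n + pos_part n"
proof -
  consider "n \<ge> 2" | "n = 1" | "n \<le> 0" by linarith
  then show ?thesis
  proof cases
    case 1
    have e: "(n+1)*(n+1-1) = n*(n-1) + n*2" by algebra
    show ?thesis using 1 unfolding binom2_def pos_part_def e by simp
  qed (auto simp: binom2_def pos_part_def)
qed

lemma main:
  fixes r k s m :: int
  assumes r: "r \<ge> 0" and s: "s \<ge> 1" and m: "s*m \<le> r" "r < s*m + s" and k: "k \<ge> r"
  shows "(s+1) * binom2 (k + 2 - (r + 1)) - (s - (r+1-s*m)) * binom2 (k + 2 - (r+m+1))
           - (r+1-s*m) * binom2 (k + 2 - (r+m+1 + 1))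
      = binom2 (k + 2) - binom2 (r + 2) - (\<Sum>j\<in>{1..k - r}. pos_part (r + j + 1 - j * (s+1)))"
  using k
proof (induction k rule: int_ge_induct)
  case base
  have "m \<ge> 0"
  proof (rule ccontr)
    assume "\<not> m \<ge> 0"
    hence "s*m \<le> s*(-1)" using s by (intro mult_left_mono) auto
    thus False using m r by simp
  qed
  hence z1: "binom2 (r + 2 - (r+m+1)) = 0" "binom2 (r + 2 - (r+m+1+1)) = 0"
    "binom2 (r + 2 - (r+1)) = 0" unfolding binom2_def by auto
  show ?case unfolding z1 by simp
next
  case (step k)
  define n where "n = k + 1 - r"
  have n1: "n \<ge> 1" using step n_def by simp
  have S: "{1..k+1-r} = insert n {1..k-r}" unfolding n_def
    using step by auto
  have nn: "n \<notin> {1..k-r}" unfolding n_def by simp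
  have e1: "k + 1 + 2 - (r+1) = (k+2-(r+1)) + 1" by simp
  have e2: "k + 1 + 2 - (r+m+1) = (k+2-(r+m+1)) + 1" by simp
  have e3: "k + 1 + 2 - (r+m+1+1) = (k+2-(r+m+1+1)) + 1" by simp
  have e4: "k + 1 + 2 = (k+2) + 1" by simp
  have key: "(s+1) * pos_part (k + 2 - (r + 1)) - (s - (r+1-s*m)) * pos_part (k + 2 - (r+m+1))
           - (r+1-s*m) * pos_part (k + 2 - (r+m+1 + 1))
      = pos_part (k+2) - pos_part (r + n + 1 - n * (s+1))"
  proof (cases "n \<le> m")
    case True
    have ns: "s*n \<le> s*m" using True s by (simp add: mult_left_mono)
    have p0: "r + n + 1 - n * (s+1) = r + 1 - s*n" by (simp add: algebra_simps)
    have p: "r + n + 1 - n * (s+1) \<ge> 0" using ns p0 m by linarith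
    have q1: "pos_part (k + 2 - (r + 1)) = n" using n1 unfolding pos_part_def n_def by simp
    have q2: "pos_part (k + 2 - (r+m+1)) = 0" using True unfolding pos_part_def n_def by simp
    have q3: "pos_part (k + 2 - (r+m+1+1)) = 0" using True unfolding pos_part_def n_def by simp
    have q4: "pos_part (k+2) = k+2" using step r unfolding pos_part_def by simp
    have q5: "pos_part (r + n + 1 - n * (s+1)) = r + n + 1 - n * (s+1)" using p unfolding pos_part_def by simp
    show ?thesis unfolding q1 q2 q3 q4 q5 by (simp add: n_def algebra_simps)
  next
    case False
    have ns: "s*(m+1) \<le> s*n" using False s by (simp add: mult_left_mono)
    have p0: "r + n + 1 - n * (s+1) = r + 1 - s*n" by (simp add: algebra_simps)
    have p1: "s*(m+1) = s*m + s" by (simp add: algebra_simps)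
    have p: "r + n + 1 - n * (s+1) \<le> 0" using ns p0 p1 m by linarith
    have q1: "pos_part (k + 2 - (r + 1)) = n" using n1 unfolding pos_part_def n_def by simp
    have q2: "pos_part (k + 2 - (r+m+1)) = n - m" using False unfolding pos_part_def n_def by simp
    have q3: "pos_part (k + 2 - (r+m+1+1)) = n - m - 1" using False unfolding pos_part_def n_def by simp
    have q4: "pos_part (k+2) = k+2" using step r unfolding pos_part_def by simp
    have q5: "pos_part (r + n + 1 - n * (s+1)) = 0" using p unfolding pos_part_def by simp
    show ?thesis unfolding q1 q2 q3 q4 q5 by (simp add: n_def algebra_simps)
  qed
  show ?case
    unfolding e1 e2 e3 unfolding e4 binom2_succ S sum.insert[OF finite_atLeastAtMost_int nn]
    using step.IH key unfolding distrib_left by linarith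
qed

theorem lemma4p4:
  fixes r k t :: int
  assumes "r \<ge> 0" and "k \<ge> r" and "2 \<le> t" and "t \<le> r + 1"
  shows "let \<Omega> = (t * r) div (t - 1) + 1;
             a = t * (r + 1) + (1 - t) * \<Omega>;
             b = t - 1 - a
         in t * binom2 (k + 2 - (r + 1)) - b * binom2 (k + 2 - \<Omega>) - a * binom2 (k + 2 - (\<Omega> + 1))
            = binom2 (k + 2) - binom2 (r + 2) - (\<Sum>j\<in>{1..k - r}. pos_part (r + j + 1 - j * t))"
proof -
  define s where "s = t - 1"
  define m where "m = r div s"
  have s1: "s \<ge> 1" using assms s_def by simp
  have tt: "t = s + 1" using s_def by simp
  have d: "(t*r) div (t-1) = r + m"
  proof -
    have "t*r = r + s*r" using tt by (simp add: algebra_simps)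
    hence "(t*r) div s = r div s + r" using s1 by simp
    thus ?thesis using s_def m_def by simp
  qed
  have mm: "s*m \<le> r" "r < s*m + s"
  proof -
    have "s*m + r mod s = r" unfolding m_def by (metis mult_div_mod_eq)
    moreover have "0 \<le> r mod s" "r mod s < s" using s1 by auto
    ultimately show "s*m \<le> r" "r < s*m + s" by linarith+
  qed
  have a: "t * (r + 1) + (1 - t) * (r+m+1) = r+1-s*m" using tt by (simp add: algebra_simps)
  have b: "t - 1 - (r+1-s*m) = s - (r+1-s*m)" using tt by simp
  show ?thesis unfolding Let_def d a b unfolding tt by (rule main[OF assms(1) s1 mm assms(2)])
qed

end
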